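(* Part 1. Each preorder $(B,\le)$ yields a fibrous preorder $E(B,\le)=(R,B,B,1_B,\partial)$, with $xRy\iff x\le y$ and $\partial(x,y)=y$. Each monotone map $f\colon(B,\le)\to(B',\le')$ yields a fibrous morphism $E(f)=(f,f^* )$ with $f^*(f(b),b)=b$. This defines an embedding of the category of preorders and monotone maps into the category of fibrous preorders and fibrous morphisms. Part 2. A fibrous preorder $(R,A,B,p,\partial)$ is equivalent to one of the form $E(B,\le)$ if and only if there exists a map $u\colon B\to A$ with $pu=1_B$ such that $up(a)Ry\Rightarrow aRy$ for all $a\in A$ and $y\in B$. Part 3. In that case, define $xR^\circ y\iff u(x)Ry$ for $x,y\in B$. Then $R^\circ$ is a preorder (reflexive and transitive) on $B$, and $(R,A,B,p,\partial)$ is equivalent to $E(B,R^\circ)$.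
   Context: A fibrous preorder is a sequence $R\xrightarrow{\partial}A\xrightarrow{p}B$ consisting of the following data: - sets $A$ and $B$; - a map $p\colon A\to B$; - a relation $R\subseteq A\times B$ (write $aRb$ for $(a,b)\in R$); - a map $\partial\colon R\to A$. These must satisfy, for all $a\in A$ and $b,y\in B$ with $aRb$: - (F1) $p\partial(a,b)=b$; - (F2) $aRp(a)$ (this holds for all $a\in A$); - (F3) $\partial(a,b)Ry\Rightarrow aRy$. Given fibrous preorders $\mathbf{A}=(R,A,B,p,\partial)$ and $\mathbf{A}'=(R',A',B',p',\partial')$, a fibrous morphism $\mathbf{A}\to\mathbf{A}'$ is a pair $(f,f^* )$ with $f\colon B\to B'$ a map and $f^*\colon A'_f\to A$ a map, where $A'_f=\{(a',b)\in A'\times B\mid p'(a')=f(b)\}$. These must satisfy, for all $(a',b)\in A'_f$ and $y\in B$: - $pf^*(a',b)=b$; - $f^*(a',b)Ry\Rightarrow a'R'f(y)$. Composition is $(g,g^* )\circ(f,f^* )=(gf,h)$ with $h(a'',b)=f^*(g^*(a'',f(b)),b)$. Two fibrous preorders $(R,A,B,p,\partial)$ and $(R',A',B',p',\partial')$ are equivalent if $B=B'$ and there exist maps $\varphi\colon A\to A'$ and $\gamma\colon A'\to A$ with $p'\varphi=p$ and $p\gamma=p'$ such that, for all $a\in A$, $a'\in A'$ and $b\in B$, $\varphi(a)R'b\Rightarrow aRb$ and $\gamma(a')Rb\Rightarrow a'R'b$. *)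

theory Defs
  imports Main
begin

text \<open>A fibrous preorder R -d-> A -p-> B is represented by carrier sets A, B,
  a map p (meaningful on A), a relation R given as a predicate which must be a
  subset of A x B, and a map d (meaningful on R).\<close>

definition fibrous_preorder ::
  "'a set \<Rightarrow> 'b set \<Rightarrow> ('a \<Rightarrow> 'b) \<Rightarrow> ('a \<Rightarrow> 'b \<Rightarrow> bool) \<Rightarrow> ('a \<Rightarrow> 'b \<Rightarrow> 'a) \<Rightarrow> bool" where
  "fibrous_preorder A B p R d \<longleftrightarrow>
     (\<forall>a\<in>A. p a \<in> B) \<and>
     (\<forall>a b. R a b \<longrightarrow> a \<in> A \<and> b \<in> B) \<and>
     (\<forall>a b. R a b \<longrightarrow> d a b \<in> A) \<and>
     (\<forall>a b. R a b \<longrightarrow> p (d a b) = b) \<and>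
     (\<forall>a\<in>A. R a (p a)) \<and>
     (\<forall>a b y. R a b \<longrightarrow> y \<in> B \<longrightarrow> R (d a b) y \<longrightarrow> R a y)"

text \<open>Fibrous morphism (f, fs) from (A,B,p,R,d) to (A',B',p',R',d');
  fs is meaningful on A'_f = {(a',b) | a' in A', b in B, p' a' = f b}.\<close>

definition fibrous_morphism ::
  "'a set \<Rightarrow> 'b set \<Rightarrow> ('a \<Rightarrow> 'b) \<Rightarrow> ('a \<Rightarrow> 'b \<Rightarrow> bool) \<Rightarrow> ('a \<Rightarrow> 'b \<Rightarrow> 'a) \<Rightarrow>
   'c set \<Rightarrow> 'd set \<Rightarrow> ('c \<Rightarrow> 'd) \<Rightarrow> ('c \<Rightarrow> 'd \<Rightarrow> bool) \<Rightarrow> ('c \<Rightarrow> 'd \<Rightarrow> 'c) \<Rightarrow>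
   ('b \<Rightarrow> 'd) \<Rightarrow> ('c \<Rightarrow> 'b \<Rightarrow> 'a) \<Rightarrow> bool" where
  "fibrous_morphism A B p R d A' B' p' R' d' f fs \<longleftrightarrow>
     (\<forall>b\<in>B. f b \<in> B') \<and>
     (\<forall>a'\<in>A'. \<forall>b\<in>B. p' a' = f b \<longrightarrow>
        fs a' b \<in> A \<and> p (fs a' b) = b \<and>
        (\<forall>y\<in>B. R (fs a' b) y \<longrightarrow> R' a' (f y)))"

definition fib_mor_eq ::
  "'b set \<Rightarrow> 'c set \<Rightarrow> ('c \<Rightarrow> 'd) \<Rightarrow> ('b \<Rightarrow> 'd) \<Rightarrow> ('c \<Rightarrow> 'b \<Rightarrow> 'a) \<Rightarrow>
   ('b \<Rightarrow> 'd) \<Rightarrow> ('c \<Rightarrow> 'b \<Rightarrow> 'a) \<Rightarrow> bool" where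
  "fib_mor_eq B A' p' f fs g gs \<longleftrightarrow>
     (\<forall>b\<in>B. f b = g b) \<and>
     (\<forall>a'\<in>A'. \<forall>b\<in>B. p' a' = f b \<longrightarrow> fs a' b = gs a' b)"

definition fib_id_star :: "'a \<Rightarrow> 'b \<Rightarrow> 'a" where
  "fib_id_star = (\<lambda>a b. a)"

definition fib_comp_star ::
  "('b \<Rightarrow> 'c) \<Rightarrow> ('c' \<Rightarrow> 'b \<Rightarrow> 'a) \<Rightarrow> ('c'' \<Rightarrow> 'c \<Rightarrow> 'c') \<Rightarrow> 'c'' \<Rightarrow> 'b \<Rightarrow> 'a" where
  "fib_comp_star f fs gs = (\<lambda>a'' b. fs (gs a'' (f b)) b)"

definition fibrous_equiv ::
  "'a set \<Rightarrow> 'b set \<Rightarrow> ('a \<Rightarrow> 'b) \<Rightarrow> ('a \<Rightarrow> 'b \<Rightarrow> bool) \<Rightarrow> ('a \<Rightarrow> 'b \<Rightarrow> 'a) \<Rightarrow>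
   'c set \<Rightarrow> 'b set \<Rightarrow> ('c \<Rightarrow> 'b) \<Rightarrow> ('c \<Rightarrow> 'b \<Rightarrow> bool) \<Rightarrow> ('c \<Rightarrow> 'b \<Rightarrow> 'c) \<Rightarrow> bool" where
  "fibrous_equiv A B p R d A' B' p' R' d' \<longleftrightarrow> B = B' \<and>
     (\<exists>\<phi> \<gamma>. (\<forall>a\<in>A. \<phi> a \<in> A' \<and> p' (\<phi> a) = p a) \<and>
            (\<forall>a'\<in>A'. \<gamma> a' \<in> A \<and> p (\<gamma> a') = p' a') \<and>
            (\<forall>a\<in>A. \<forall>b\<in>B. R' (\<phi> a) b \<longrightarrow> R a b) \<and>
            (\<forall>a'\<in>A'. \<forall>b\<in>B. R (\<gamma> a') b \<longrightarrow> R' a' b))"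

definition is_preorder :: "'b set \<Rightarrow> ('b \<Rightarrow> 'b \<Rightarrow> bool) \<Rightarrow> bool" where
  "is_preorder B le \<longleftrightarrow> (\<forall>x\<in>B. le x x) \<and>
     (\<forall>x\<in>B. \<forall>y\<in>B. \<forall>z\<in>B. le x y \<longrightarrow> le y z \<longrightarrow> le x z)"

definition monotone_betw ::
  "'b set \<Rightarrow> ('b \<Rightarrow> 'b \<Rightarrow> bool) \<Rightarrow> 'c set \<Rightarrow> ('c \<Rightarrow> 'c \<Rightarrow> bool) \<Rightarrow> ('b \<Rightarrow> 'c) \<Rightarrow> bool" where
  "monotone_betw B le B' le' f \<longleftrightarrow> (\<forall>x\<in>B. f x \<in> B') \<and>
     (\<forall>x\<in>B. \<forall>y\<in>B. le x y \<longrightarrow> le' (f x) (f y))"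

definition E_R :: "'b set \<Rightarrow> ('b \<Rightarrow> 'b \<Rightarrow> bool) \<Rightarrow> 'b \<Rightarrow> 'b \<Rightarrow> bool" where
  "E_R B le x y \<longleftrightarrow> x \<in> B \<and> y \<in> B \<and> le x y"

definition E_d :: "'b \<Rightarrow> 'b \<Rightarrow> 'b" where
  "E_d x y = y"

definition E_star :: "('b \<Rightarrow> 'c) \<Rightarrow> 'c \<Rightarrow> 'b \<Rightarrow> 'b" where
  "E_star f = (\<lambda>a' b. b)"

end

theory Submission
  imports Defs
begin

lemma p1a: "is_preorder B le \<Longrightarrow> fibrous_preorder B B id (E_R B le) E_d"
  unfolding is_preorder_def fibrous_preorder_def E_R_def E_d_def by auto
lemma p1b: "is_preorder B le \<and> is_preorder B' le' \<and> monotone_betw B le B' le' f \<Longrightarrow>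
        fibrous_morphism B B id (E_R B le) E_d B' B' id (E_R B' le') E_d f (E_star f)"
  unfolding fibrous_morphism_def monotone_betw_def E_R_def E_star_def by auto
lemma p1c: "is_preorder B le \<Longrightarrow> fib_mor_eq B B id (\<lambda>x. x) (E_star (\<lambda>x. x)) id fib_id_star"
  unfolding fib_mor_eq_def E_star_def fib_id_star_def by simp
lemma p1d: "is_preorder B le \<and> is_preorder B' le' \<and> is_preorder B'' le'' \<and>
        monotone_betw B le B' le' f \<and> monotone_betw B' le' B'' le'' g \<Longrightarrow>
        fib_mor_eq B B'' id (g \<circ> f) (fib_comp_star f (E_star f) (E_star g))
                               (g \<circ> f) (E_star (g \<circ> f))"
  unfolding fib_mor_eq_def E_star_def fib_comp_star_def by simp
lemma p1e: "is_preorder B le \<and> is_preorder B' le' \<and>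
        monotone_betw B le B' le' f \<and> monotone_betw B le B' le' g \<and>
        fib_mor_eq B B' id f (E_star f) g (E_star g) \<Longrightarrow> (\<forall>b\<in>B. f b = g b)"
  unfolding fib_mor_eq_def by blast
lemma p1f: "is_preorder B le \<and> is_preorder B' le' \<and>
        (B, B, id, E_R B le, E_d) = (B', B', id, E_R B' le', E_d) \<Longrightarrow>
        B = B' \<and> (\<forall>x\<in>B. \<forall>y\<in>B. le x y = le' x y)"
  by (auto simp: E_R_def fun_eq_iff)

lemma part3:
  assumes fp: "fibrous_preorder A B p R d"
    and u1: "\<forall>b\<in>B. u b \<in> A \<and> p (u b) = b"
    and u2: "\<forall>a\<in>A. \<forall>y\<in>B. R (u (p a)) y \<longrightarrow> R a y"
  shows "is_preorder B (\<lambda>x y. R (u x) y) \<and>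
      fibrous_equiv A B p R d B B id (E_R B (\<lambda>x y. R (u x) y)) E_d"
proof
  show "is_preorder B (\<lambda>x y. R (u x) y)"
    unfolding is_preorder_def
  proof (intro conjI ballI impI)
    fix x assume xB: "x \<in> B"
    have "R (u x) (p (u x))" using fp u1 xB unfolding fibrous_preorder_def by blast
    then show "R (u x) x" using u1 xB by simp
  next
    fix x y z assume xB: "x \<in> B" and yB: "y \<in> B" and zB: "z \<in> B" and r1: "R (u x) y" and r2: "R (u y) z"
    have dA: "d (u x) y \<in> A" and pd: "p (d (u x) y) = y" using fp r1 unfolding fibrous_preorder_def by auto
    have "R (d (u x) y) z" using u2 dA zB r2 pd by force
    then show "R (u x) z" using fp r1 zB unfolding fibrous_preorder_def by blast
  qed
next
  show "fibrous_equiv A B p R d B B id (E_R B (\<lambda>x y. R (u x) y)) E_d"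
    unfolding fibrous_equiv_def
  proof (intro conjI exI[of _ p] exI[of _ u])
    show "\<forall>a\<in>A. p a \<in> B \<and> id (p a) = p a" using fp unfolding fibrous_preorder_def by simp
    show "\<forall>a'\<in>B. u a' \<in> A \<and> p (u a') = id a'" using u1 by simp
    show "\<forall>a\<in>A. \<forall>b\<in>B. E_R B (\<lambda>x y. R (u x) y) (p a) b \<longrightarrow> R a b"
      using u2 unfolding E_R_def by blast
    show "\<forall>a'\<in>B. \<forall>b\<in>B. R (u a') b \<longrightarrow> E_R B (\<lambda>x y. R (u x) y) a' b"
      unfolding E_R_def by blast
  qed simp
qed

theorem mainTheorem4:
  shows
  \<comment> \<open>Part 1: E is an embedding (injective-on-objects, faithful functor).\<close>
  "((\<forall>(B::'b set) le. is_preorder B le \<longrightarrow> fibrous_preorder B B id (E_R B le) E_d) \<and>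
    (\<forall>(B::'b set) le (B'::'c set) le' f. is_preorder B le \<and> is_preorder B' le' \<and>
        monotone_betw B le B' le' f \<longrightarrow>
        fibrous_morphism B B id (E_R B le) E_d B' B' id (E_R B' le') E_d f (E_star f)) \<and>
    (\<forall>(B::'b set) le. is_preorder B le \<longrightarrow>
        fib_mor_eq B B id (\<lambda>x. x) (E_star (\<lambda>x. x)) id fib_id_star) \<and>
    (\<forall>(B::'b set) le (B'::'c set) le' (B''::'d set) le'' f g.
        is_preorder B le \<and> is_preorder B' le' \<and> is_preorder B'' le'' \<and>
        monotone_betw B le B' le' f \<and> monotone_betw B' le' B'' le'' g \<longrightarrow>
        fib_mor_eq B B'' id (g \<circ> f) (fib_comp_star f (E_star f) (E_star g))
                               (g \<circ> f) (E_star (g \<circ> f))) \<and>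
    (\<forall>(B::'b set) le (B'::'c set) le' f g.
        is_preorder B le \<and> is_preorder B' le' \<and>
        monotone_betw B le B' le' f \<and> monotone_betw B le B' le' g \<and>
        fib_mor_eq B B' id f (E_star f) g (E_star g) \<longrightarrow> (\<forall>b\<in>B. f b = g b)) \<and>
    (\<forall>(B::'b set) le B' le'. is_preorder B le \<and> is_preorder B' le' \<and>
        (B, B, id, E_R B le, E_d) = (B', B', id, E_R B' le', E_d) \<longrightarrow>
        B = B' \<and> (\<forall>x\<in>B. \<forall>y\<in>B. le x y = le' x y)))
   \<and>
   \<comment> \<open>Part 2\<close>
   (\<forall>(A::'a set) (B::'b set) p R d. fibrous_preorder A B p R d \<longrightarrow>
      ((\<exists>le. is_preorder B le \<and> fibrous_equiv A B p R d B B id (E_R B le) E_d) \<longleftrightarrow>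
       (\<exists>u. (\<forall>b\<in>B. u b \<in> A \<and> p (u b) = b) \<and>
            (\<forall>a\<in>A. \<forall>y\<in>B. R (u (p a)) y \<longrightarrow> R a y))))
   \<and>
   \<comment> \<open>Part 3\<close>
   (\<forall>(A::'a set) (B::'b set) p R d u. fibrous_preorder A B p R d \<and>
      (\<forall>b\<in>B. u b \<in> A \<and> p (u b) = b) \<and>
      (\<forall>a\<in>A. \<forall>y\<in>B. R (u (p a)) y \<longrightarrow> R a y) \<longrightarrow>
      is_preorder B (\<lambda>x y. R (u x) y) \<and>
      fibrous_equiv A B p R d B B id (E_R B (\<lambda>x y. R (u x) y)) E_d)"
  
proof (intro conjI allI impI)
  show "\<And>A B p R d u. fibrous_preorder A B p R d \<and>
      (\<forall>b\<in>B. u b \<in> A \<and> p (u b) = b) \<and>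
      (\<forall>a\<in>A. \<forall>y\<in>B. R (u (p a)) y \<longrightarrow> R a y) \<Longrightarrow>
      is_preorder B (\<lambda>x y. R (u x) y)"
    using part3 by blast
  show "\<And>A B p R d u. fibrous_preorder A B p R d \<and>
      (\<forall>b\<in>B. u b \<in> A \<and> p (u b) = b) \<and>
      (\<forall>a\<in>A. \<forall>y\<in>B. R (u (p a)) y \<longrightarrow> R a y) \<Longrightarrow>
      fibrous_equiv A B p R d B B id (E_R B (\<lambda>x y. R (u x) y)) E_d"
    using part3 by blast
  fix A :: "'a set" and B :: "'b set" and p R d
  assume fp: "fibrous_preorder A B p R d"
  show "(\<exists>le. is_preorder B le \<and> fibrous_equiv A B p R d B B id (E_R B le) E_d) \<longleftrightarrow>
       (\<exists>u. (\<forall>b\<in>B. u b \<in> A \<and> p (u b) = b) \<and>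
            (\<forall>a\<in>A. \<forall>y\<in>B. R (u (p a)) y \<longrightarrow> R a y))"
  proof
    assume "\<exists>le. is_preorder B le \<and> fibrous_equiv A B p R d B B id (E_R B le) E_d"
    then obtain le \<phi> \<gamma> where
      ph: "\<forall>a\<in>A. \<phi> a \<in> B \<and> \<phi> a = p a" and
      ga: "\<forall>a'\<in>B. \<gamma> a' \<in> A \<and> p (\<gamma> a') = a'" and
      r1: "\<forall>a\<in>A. \<forall>b\<in>B. E_R B le (\<phi> a) b \<longrightarrow> R a b" and
      r2: "\<forall>a'\<in>B. \<forall>b\<in>B. R (\<gamma> a') b \<longrightarrow> E_R B le a' b"
      unfolding fibrous_equiv_def by auto
    show "\<exists>u. (\<forall>b\<in>B. u b \<in> A \<and> p (u b) = b) \<and>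
            (\<forall>a\<in>A. \<forall>y\<in>B. R (u (p a)) y \<longrightarrow> R a y)"
      apply (rule exI[of _ \<gamma>])
      using ph ga r1 r2 unfolding E_R_def by (metis id_apply)
  next
    assume "\<exists>u. (\<forall>b\<in>B. u b \<in> A \<and> p (u b) = b) \<and>
            (\<forall>a\<in>A. \<forall>y\<in>B. R (u (p a)) y \<longrightarrow> R a y)"
    then show "\<exists>le. is_preorder B le \<and> fibrous_equiv A B p R d B B id (E_R B le) E_d"
      using part3[OF fp] by blast
  qed
qed (fact p1a p1b p1c p1d p1e | (drule p1f, simp))+

end
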